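(* For every cycle $C$ on at least $4$ vertices, $4\le\pi_T(C)\le 6$.
   Context: A sequence is nonrepetitive if no block of consecutive terms has the form $r_1\dots r_nr_1\dots r_n$ with $n\ge1$. A (strong) total Thue colouring of a graph $G$ is a colouring of $V(G)\cup E(G)$ such that for every path $v_1,e_1,v_2,\dots,e_{k-1},v_k$ in $G$ the sequence of colours of $v_1,e_1,\dots,v_k$ is nonrepetitive, the sequence of colours of $v_1,\dots,v_k$ is nonrepetitive, and the sequence of colours of $e_1,\dots,e_{k-1}$ is nonrepetitive. $\pi_T(G)$ is the minimum number of colours in a total Thue colouring of $G$. *)

theory Defs
  imports Main
begin

definition nonrepetitive :: "'c list \<Rightarrow> bool" where
  "nonrepetitive xs \<longleftrightarrow> \<not> (\<exists>u r w. r \<noteq> [] \<and> xs = u @ r @ r @ w)"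

definition is_path :: "'a set \<Rightarrow> 'a set set \<Rightarrow> 'a list \<Rightarrow> bool" where
  "is_path V E vs \<longleftrightarrow> vs \<noteq> [] \<and> distinct vs \<and> set vs \<subseteq> V \<and>
     (\<forall>i. Suc i < length vs \<longrightarrow> {vs ! i, vs ! Suc i} \<in> E)"

definition edge_seq :: "('a set \<Rightarrow> 'c) \<Rightarrow> 'a list \<Rightarrow> 'c list" where
  "edge_seq ce vs = map (\<lambda>(a, b). ce {a, b}) (zip vs (tl vs))"

fun total_seq :: "('a \<Rightarrow> 'c) \<Rightarrow> ('a set \<Rightarrow> 'c) \<Rightarrow> 'a list \<Rightarrow> 'c list" where
  "total_seq cv ce [] = []"
| "total_seq cv ce [v] = [cv v]"
| "total_seq cv ce (v # w # vs) = cv v # ce {v, w} # total_seq cv ce (w # vs)"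

definition total_thue_colouring ::
  "'a set \<Rightarrow> 'a set set \<Rightarrow> ('a \<Rightarrow> 'c) \<Rightarrow> ('a set \<Rightarrow> 'c) \<Rightarrow> bool" where
  "total_thue_colouring V E cv ce \<longleftrightarrow>
     (\<forall>vs. is_path V E vs \<longrightarrow>
        nonrepetitive (total_seq cv ce vs) \<and>
        nonrepetitive (map cv vs) \<and>
        nonrepetitive (edge_seq ce vs))"

definition pi_T :: "'a set \<Rightarrow> 'a set set \<Rightarrow> nat" where
  "pi_T V E = (LEAST k. \<exists>cv ce. (\<forall>v\<in>V. cv v < k) \<and> (\<forall>e\<in>E. ce e < k) \<and>
                  total_thue_colouring V E (cv :: 'a \<Rightarrow> nat) (ce :: 'a set \<Rightarrow> nat))"

end

theory Submission
  imports Defs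
begin


fun tm :: "nat \<Rightarrow> bool" where
  "tm 0 = False"
| "tm (Suc n) = (tm (Suc n div 2) \<noteq> odd (Suc n))"

declare tm.simps(2)[simp del]

lemma tm_even: "tm (2*a) = tm a"
proof (cases a)
  case 0 then show ?thesis by simp
next
  case (Suc b)
  then have e: "2*a = Suc (Suc (2*b))" by simp
  have "tm (Suc (Suc (2*b))) = (tm (Suc (Suc (2*b)) div 2) \<noteq> odd (Suc (Suc (2*b))))"
    by (rule tm.simps(2))
  also have "Suc (Suc (2*b)) div 2 = a" using Suc by simp
  finally show ?thesis using e by simp
qed

lemma tm_odd: "tm (Suc (2*a)) = (\<not> tm a)"
proof -
  have "tm (Suc (2*a)) = (tm (Suc (2*a) div 2) \<noteq> odd (Suc (2*a)))"
    by (rule tm.simps(2))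
  also have "Suc (2*a) div 2 = a" by simp
  finally show ?thesis by simp
qed

lemma tm_pair: "tm (2*a) \<noteq> tm (Suc (2*a))"
  using tm_even tm_odd by simp

lemma tm_oddpos: "(tm (Suc (2*a)) \<noteq> tm (Suc (Suc (2*a)))) = (tm a = tm (Suc a))"
proof -
  have "Suc (Suc (2*a)) = 2 * Suc a" by simp
  then show ?thesis using tm_even[of "Suc a"] tm_odd[of a] by auto
qed

lemma tm_adj: "\<not> (tm a = tm (Suc a) \<and> tm (Suc a) = tm (Suc (Suc a)))"
proof
  assume H: "tm a = tm (Suc a) \<and> tm (Suc a) = tm (Suc (Suc a))"
  show False
  proof (cases "even a")
    case True
    then obtain b where b: "a = 2*b" by (rule evenE)
    have "tm (2*b) = tm (Suc (2*b))" using conjunct1[OF H] unfolding b .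
    with tm_pair[of b] show False by (rule notE)
  next
    case False
    then obtain b where "a = Suc (2*b)" by (metis oddE Suc_eq_plus1 add.commute)
    then have b: "Suc a = 2 * Suc b" by simp
    have "tm (2 * Suc b) = tm (Suc (2 * Suc b))" using conjunct2[OF H] unfolding b .
    with tm_pair[of "Suc b"] show False by (rule notE)
  qed
qed

lemma overlap_free: "0 < k \<Longrightarrow> \<not> (\<forall>j\<le>k. tm (i+j) = tm (i+j+k))"
proof (induction k arbitrary: i rule: less_induct)
  case (less k)
  show ?case
  proof
    assume H: "\<forall>j\<le>k. tm (i+j) = tm (i+j+k)"
    show False
    proof (cases "even k")
      case True
      then obtain k' where k': "k = 2*k'" by (rule evenE)
      with less.prems have "0 < k'" "k' < k" by auto
      show False
      proof (cases "even i")
        case True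
        then obtain b where b: "i = 2*b" by (rule evenE)
        have "\<forall>j\<le>k'. tm (b+j) = tm (b+j+k')"
        proof (intro allI impI)
          fix j assume "j \<le> k'"
          then have "2*j \<le> k" using k' by simp
          then have "tm (i + 2*j) = tm (i + 2*j + k)" by (rule H[rule_format])
          moreover have "i + 2*j = 2*(b+j)" "i+2*j+k = 2*(b+j+k')" using b k' by auto
          ultimately show "tm (b+j) = tm (b+j+k')" using tm_even[of "b+j"] tm_even[of "b+j+k'"] by simp
        qed
        with less.IH[OF \<open>k' < k\<close> \<open>0<k'\<close>, of b] show False by (rule notE)
      next
        case False
        then obtain b where b: "i = Suc (2*b)" by (metis oddE Suc_eq_plus1 add.commute)
        have "\<forall>j\<le>k'. tm (b+j) = tm (b+j+k')"
        proof (intro allI impI)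
          fix j assume "j \<le> k'"
          then have "2*j \<le> k" using k' by simp
          then have "tm (i + 2*j) = tm (i + 2*j + k)" by (rule H[rule_format])
          moreover have "i + 2*j = Suc (2*(b+j))" "i+2*j+k = Suc (2*(b+j+k'))" using b k' by auto
          ultimately show "tm (b+j) = tm (b+j+k')" using tm_odd[of "b+j"] tm_odd[of "b+j+k'"] by simp
        qed
        with less.IH[OF \<open>k' < k\<close> \<open>0<k'\<close>, of b] show False by (rule notE)
      qed
    next
      case False
      have dk: "tm m = tm (m+k) \<and> tm (Suc m) = tm (Suc m + k)" if "i \<le> m" "m < i + k" for m
      proof -
        have "tm (i + (m-i)) = tm (i + (m-i) + k)" using that by (intro H[rule_format]) auto
        moreover have "tm (i + Suc (m-i)) = tm (i + Suc (m-i) + k)" using that by (intro H[rule_format]) auto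
        ultimately show ?thesis using that by auto
      qed
      have deven: "tm m \<noteq> tm (Suc m)" if "even m" for m
      proof -
        from that obtain b where "m = 2*b" by (rule evenE)
        then show ?thesis using tm_pair[of b] by simp
      qed
      have d1: "tm m \<noteq> tm (Suc m)" if "i \<le> m" "m < i + 2*k" for m
      proof (cases "m < i + k")
        case True
        show ?thesis
        proof (cases "even m")
          case True then show ?thesis by (rule deven)
        next
          case False
          then have "even (m+k)" using \<open>odd k\<close> by auto
          then have "tm (m+k) \<noteq> tm (Suc (m+k))" by (rule deven)
          then show ?thesis using dk[OF \<open>i\<le>m\<close> True] by auto
        qed
      next
        case False
        define m' where "m' = m - k"
        have m': "i \<le> m'" "m' < i+k" "m = m'+k" using that False m'_def by auto
        have "tm m' \<noteq> tm (Suc m')"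
        proof (cases "even m'")
          case True then show ?thesis by (rule deven)
        next
          case False
          then have "even (m'+k)" using \<open>odd k\<close> by auto
          then have "tm (m'+k) \<noteq> tm (Suc (m'+k))" by (rule deven)
          then show ?thesis using dk[OF m'(1,2)] by auto
        qed
        then show ?thesis using dk[OF m'(1,2)] m'(3) by auto
      qed
      show False
      proof (cases "k = 1")
        case True
        then show False using d1[of i] H[rule_format, of 0] by auto
      next
        case False
        with \<open>0<k\<close> have "k \<ge> 2" by auto
        define a where "a = i div 2"
        have "i \<le> Suc (2*a)" "Suc (Suc (Suc (2*a))) < i + 2*k" unfolding a_def using \<open>k\<ge>2\<close> by auto
        then have F1: "tm (Suc (2*a)) \<noteq> tm (Suc (Suc (2*a)))"
          and F2: "tm (Suc (2*(Suc a))) \<noteq> tm (Suc (Suc (2*(Suc a))))"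
          using d1[of "Suc (2*a)"] d1[of "Suc (Suc (Suc (2*a)))"] by auto
        have A: "tm a = tm (Suc a)" by (rule tm_oddpos[of a, THEN iffD1, OF F1])
        have B: "tm (Suc a) = tm (Suc (Suc a))" by (rule tm_oddpos[of "Suc a", THEN iffD1, OF F2])
        show False by (rule notE[OF tm_adj[of a] conjI[OF A B]])
      qed
    qed
  qed
qed

definition s3 :: "nat \<Rightarrow> nat" where
  "s3 n = (if tm n = tm (Suc n) then 1 else if tm n then 0 else 2)"

lemma s3_lt: "s3 n < 3" by (simp add: s3_def)

lemma s3_eq1: "s3 a = s3 b \<Longrightarrow> ((tm a = tm b) = (tm (Suc a) = tm (Suc b)))"
  by (auto simp: s3_def split: if_splits)

lemma s3_eq2: "s3 a = s3 b \<Longrightarrow> tm a \<noteq> tm b \<Longrightarrow> tm a = tm (Suc a)"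
  by (auto simp: s3_def split: if_splits)

lemma s3_sqf: "0 < k \<Longrightarrow> \<not> (\<forall>j<k. s3 (q+j) = s3 (q+k+j))"
proof
  assume k: "0 < k" and H: "\<forall>j<k. s3 (q+j) = s3 (q+k+j)"
  have e: "(tm (q+j) = tm (q+k+j)) = (tm q = tm (q+k))" if "j \<le> k" for j
    using that
  proof (induction j)
    case 0 then show ?case by simp
  next
    case (Suc j)
    then have "s3 (q+j) = s3 (q+k+j)" using H by auto
    from s3_eq1[OF this] Suc show ?case by simp
  qed
  show False
  proof (cases "tm q = tm (q+k)")
    case True
    have "\<forall>j\<le>k. tm (q+j) = tm (q+j+k)"
    proof (intro allI impI)
      fix j assume j: "j \<le> k"
      have eq: "q + j + k = q + k + j" by simp
      show "tm (q+j) = tm (q+j+k)" unfolding eq by (rule iffD2[OF e[OF j] True])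
    qed
    with overlap_free[OF k, of q] show False by (rule notE)
  next
    case False
    have c: "tm (q+j) = tm q" if "j \<le> k" for j
      using that
    proof (induction j)
      case 0 then show ?case by simp
    next
      case (Suc j)
      then have "s3 (q+j) = s3 (q+k+j)" using H by auto
      moreover have "tm (q+j) \<noteq> tm (q+k+j)"
      proof
        assume "tm (q+j) = tm (q+k+j)"
        moreover have "j \<le> k" using Suc.prems by simp
        ultimately have "tm q = tm (q+k)" using e by blast
        with False show False by (rule notE)
      qed
      ultimately have "tm (q+j) = tm (Suc (q+j))" by (rule s3_eq2)
      then show ?case using Suc by auto
    qed
    have "tm (q+k) = tm q" using c[of k] by simp
    then have "tm q = tm (q+k)" by (rule sym)
    with False show False by (rule notE)
  qed
qed

lemma s3_adj: "s3 a \<noteq> s3 (Suc a)"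
proof
  assume "s3 a = s3 (Suc a)"
  then have "\<forall>j<1. s3 (a+j) = s3 (a+1+j)" by simp
  moreover have "\<not> (\<forall>j<1. s3 (a+j) = s3 (a+1+j))" by (rule s3_sqf) simp
  ultimately show False by (rule notE[rotated])
qed



lemma nonrep_map:
  assumes "\<And>q k. 0 < k \<Longrightarrow> q + 2*k \<le> N \<Longrightarrow> \<not> (\<forall>j<k. g (q+j) = g (q+k+j))"
  shows "nonrepetitive (map g [0..<N])"
  unfolding nonrepetitive_def
proof (rule notI, elim exE conjE)
  fix u r w
  assume r: "r \<noteq> []" and eq: "map g [0..<N] = u @ r @ r @ w"
  define q where "q = length u"
  define k where "k = length r"
  have "length (map g [0..<N]) = length (u @ r @ r @ w)" using eq by simp
  then have len: "N = q + 2*k + length w" unfolding q_def k_def by simp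
  have "\<forall>j<k. g (q+j) = g (q+k+j)"
  proof (intro allI impI)
    fix j assume j: "j < k"
    have "g (q+j) = map g [0..<N] ! (q+j)" using len j by simp
    also have "\<dots> = r ! j" unfolding eq q_def using j k_def by (simp add: nth_append)
    finally have 1: "g (q+j) = r ! j" .
    have "g (q+k+j) = map g [0..<N] ! (q+k+j)" using len j by simp
    also have "\<dots> = r ! j" unfolding eq q_def using j k_def by (simp add: nth_append)
    finally show "g (q+j) = g (q+k+j)" using 1 by simp
  qed
  moreover have "0 < k" "q + 2*k \<le> N" using r len k_def by auto
  ultimately show False using assms by blast
qed

lemma nonrep_rev: "nonrepetitive xs \<Longrightarrow> nonrepetitive (rev xs)"
  unfolding nonrepetitive_def
proof (rule notI, elim exE conjE)
  fix u r w
  assume n: "\<not> (\<exists>u r w. r \<noteq> [] \<and> xs = u @ r @ r @ w)" and r: "r \<noteq> []"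
    and eq: "rev xs = u @ r @ r @ w"
  have "xs = rev w @ rev r @ rev r @ rev u" using arg_cong[OF eq, of rev] by simp
  moreover have "rev r \<noteq> []" using r by simp
  ultimately show False using n by blast
qed

lemma nonrep_sq:
  assumes "nonrepetitive xs" "0 < k" "i + 2*k \<le> length xs"
  shows "\<exists>j<k. xs ! (i+j) \<noteq> xs ! (i+k+j)"
proof (rule ccontr)
  assume "\<not> ?thesis"
  then have H: "\<And>j. j < k \<Longrightarrow> xs ! (i+j) = xs ! (i+k+j)" by auto
  define A where "A = take k (drop i xs)"
  define B where "B = take k (drop k (drop i xs))"
  have "xs = take i xs @ A @ B @ drop k (drop k (drop i xs))"
    unfolding A_def B_def by (metis append_take_drop_id)
  moreover have "A = B"
  proof (rule nth_equalityI)
    show "length A = length B" unfolding A_def B_def using assms by simp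
    fix j assume "j < length A"
    then have j: "j < k" unfolding A_def using assms by simp
    have "A ! j = xs ! (i+j)" unfolding A_def using j assms by simp
    moreover have "B ! j = xs ! (i+k+j)" unfolding B_def using j assms by (simp add: add.commute add.left_commute)
    ultimately show "A ! j = B ! j" using H[OF j] by simp
  qed
  moreover have "A \<noteq> []" unfolding A_def using assms by simp
  ultimately show False using assms(1) unfolding nonrepetitive_def by metis
qed

lemma total_seq_nth:
  "vs \<noteq> [] \<Longrightarrow> total_seq cv ce vs = map (\<lambda>m. if even m then cv (vs ! (m div 2))
      else ce {vs ! (m div 2), vs ! Suc (m div 2)}) [0..<2 * length vs - 1]"
proof (induction cv ce vs rule: total_seq.induct)
  case (1 cv ce) then show ?case by simp
next
  case (2 cv ce v) then show ?case by simp
next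
  case (3 cv ce v w vs)
  have IH: "total_seq cv ce (w # vs) = map (\<lambda>m. if even m then cv ((w#vs) ! (m div 2))
      else ce {(w#vs) ! (m div 2), (w#vs) ! Suc (m div 2)}) [0..<2 * length (w#vs) - 1]"
    using 3 by simp
  show ?case
  proof (rule nth_equalityI)
    show "length (total_seq cv ce (v # w # vs)) = length (map (\<lambda>m. if even m then cv ((v # w # vs) ! (m div 2))
      else ce {(v # w # vs) ! (m div 2), (v # w # vs) ! Suc (m div 2)}) [0..<2 * length (v # w # vs) - 1])"
      using IH by simp
  next
    fix m assume m: "m < length (total_seq cv ce (v # w # vs))"
    then have m': "m < 2 * length vs + 3" using IH by simp
    show "total_seq cv ce (v # w # vs) ! m = map (\<lambda>m. if even m then cv ((v # w # vs) ! (m div 2))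
      else ce {(v # w # vs) ! (m div 2), (v # w # vs) ! Suc (m div 2)}) [0..<2 * length (v # w # vs) - 1] ! m"
    proof (cases m)
      case 0 then show ?thesis using m' by (simp del: upt.simps)
    next
      case (Suc p)
      show ?thesis
      proof (cases p)
        case 0 then show ?thesis using Suc m' by (simp del: upt.simps)
      next
        case (Suc p')
        have "Suc (Suc p') div 2 = Suc (p' div 2)" by simp
        then show ?thesis using \<open>m = Suc p\<close> Suc m' IH by (simp add: nth_Cons' del: upt.simps)
      qed
    qed
  qed
qed

lemma edge_seq_nth: "edge_seq ce vs = map (\<lambda>j. ce {vs ! j, vs ! Suc j}) [0..<length vs - 1]"
  unfolding edge_seq_def
  by (rule nth_equalityI) (auto simp: nth_tl)

lemma edge_seq_simps:
  "edge_seq ce [] = []" "edge_seq ce [v] = []"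
  "edge_seq ce (v # w # vs) = ce {v, w} # edge_seq ce (w # vs)"
  unfolding edge_seq_def by auto

lemma total_seq_snoc:
  "total_seq cv ce (vs @ [x]) = (if vs = [] then [cv x] else total_seq cv ce vs @ [ce {last vs, x}, cv x])"
  by (induction cv ce vs rule: total_seq.induct) auto

lemma total_seq_rev: "total_seq cv ce (rev vs) = rev (total_seq cv ce vs)"
proof (induction vs)
  case Nil then show ?case by simp
next
  case (Cons v vs)
  have "total_seq cv ce (rev (v # vs)) = total_seq cv ce (rev vs @ [v])" by simp
  also have "\<dots> = (if rev vs = [] then [cv v] else total_seq cv ce (rev vs) @ [ce {last (rev vs), v}, cv v])"
    by (rule total_seq_snoc)
  also have "\<dots> = rev (total_seq cv ce (v # vs))"
    using Cons.IH by (cases vs) (simp_all add: last_rev insert_commute)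
  finally show ?case .
qed

lemma edge_seq_snoc:
  "edge_seq ce (vs @ [x]) = (if vs = [] then [] else edge_seq ce vs @ [ce {last vs, x}])"
proof (induction vs rule: induct_list012)
  case 1 then show ?case by (simp add: edge_seq_simps)
next
  case (2 v) then show ?case by (simp add: edge_seq_simps)
next
  case (3 v w vs) then show ?case by (simp add: edge_seq_simps)
qed

lemma edge_seq_rev: "edge_seq ce (rev vs) = rev (edge_seq ce vs)"
proof (induction vs)
  case Nil then show ?case by (simp add: edge_seq_simps)
next
  case (Cons v vs)
  have "edge_seq ce (rev (v # vs)) = edge_seq ce (rev vs @ [v])" by simp
  also have "\<dots> = (if rev vs = [] then [] else edge_seq ce (rev vs) @ [ce {last (rev vs), v}])"
    by (rule edge_seq_snoc)
  also have "\<dots> = rev (edge_seq ce (v # vs))"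
    using Cons.IH by (cases vs) (simp_all add: last_rev insert_commute edge_seq_simps)
  finally show ?case .
qed

lemma mod_shift_ne:
  fixes a k n :: nat
  assumes "0 < k" "k < n" shows "(a + k) mod n \<noteq> a mod n"
proof
  assume h: "(a + k) mod n = a mod n"
  have "(a + k) mod n = (a mod n + k) mod n" by (simp add: mod_simps)
  moreover have "a mod n < n" using assms by simp
  ultimately have h2: "(a mod n + k) mod n = a mod n" using h by simp
  define b where "b = a mod n"
  have bn: "b < n" using assms b_def by simp
  show False
  proof (cases "b + k < n")
    case True
    then show False using h2 assms unfolding b_def[symmetric] by simp
  next
    case False
    then have "(b + k) mod n = (b + k - n) mod n" by (simp add: le_mod_geq)
    also have "\<dots> = b + k - n" using bn assms by simp
    finally show False using h2 assms False unfolding b_def[symmetric] by simp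
  qed
qed

lemma cyc_sqf:
  fixes G c :: "nat \<Rightarrow> nat"
  assumes G: "\<And>q k. 0 < k \<Longrightarrow> \<not> (\<forall>j<k. G (q+j) = G (q+k+j))"
    and Gsp: "\<And>i. G i \<noteq> sp" and c: "\<And>i. c i = (if i = n - 1 then sp else G i)"
    and k: "0 < k" "2*k \<le> n"
  shows "\<not> (\<forall>j<k. c ((p+j) mod n) = c ((p+k+j) mod n))"
proof
  assume H: "\<forall>j<k. c ((p+j) mod n) = c ((p+k+j) mod n)"
  have n: "0 < n" "k < n" using k by auto
  have csp: "c i = sp \<Longrightarrow> i = n - 1" for i using c Gsp by (cases "i = n - 1") auto
  show False
  proof (cases "\<exists>j<2*k. (p+j) mod n = n - 1")
    case True
    then obtain j where j: "j < 2*k" "(p+j) mod n = n - 1" by blast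
    show False
    proof (cases "j < k")
      case True
      have "c ((p+j) mod n) = sp" using j(2) c by simp
      then have "c ((p+k+j) mod n) = sp" using H True by simp
      then have "(p+j+k) mod n = n - 1" using csp by (simp add: add.commute add.left_commute)
      then show False using mod_shift_ne[of k n "p+j"] k n j(2) by simp
    next
      case False
      define j' where "j' = j - k"
      have j': "j' < k" "p + k + j' = p + j" using False j j'_def by auto
      have X: "(p+k+j') mod n = n - 1" unfolding j'(2) by (rule j(2))
      then have "c ((p+k+j') mod n) = sp" using c by simp
      then have "c ((p+j') mod n) = sp" using H j'(1) by simp
      then have Y: "(p+j') mod n = n - 1" using csp by simp
      have eq: "p + j' + k = p + k + j'" by simp
      have "(p + j' + k) mod n \<noteq> (p+j') mod n" by (rule mod_shift_ne) (use k n in auto)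
      then show False unfolding eq X Y by simp
    qed
  next
    case False
    define b where "b = p mod n"
    have bn: "b < n" using n b_def by simp
    have pj: "(p+j) mod n = (b + j) mod n" for j unfolding b_def by (rule mod_add_left_eq[symmetric])
    have b2: "b + 2*k \<le> n - 1"
    proof (rule ccontr)
      assume "\<not> b + 2*k \<le> n - 1"
      then have "n - 1 - b < 2*k" using k by linarith
      moreover have "(p + (n - 1 - b)) mod n = n - 1"
      proof -
        have e: "b + (n - 1 - b) = n - 1" using bn by linarith
        have "n - 1 < n" using n by linarith
        then have "(n - 1) mod n = n - 1" by (rule mod_less)
        then show ?thesis unfolding pj e .
      qed
      ultimately have "\<exists>j<2*k. (p+j) mod n = n - 1" by (intro exI[of _ "n - 1 - b"] conjI)
      with False show False by (rule notE)
    qed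
    have pj2: "(p+j) mod n = b + j" if "j < 2*k" for j
    proof -
      have "b + j < n" using that b2 n by linarith
      then show ?thesis unfolding pj by simp
    qed
    have "\<forall>j<k. G (b+j) = G (b+k+j)"
    proof (intro allI impI)
      fix j assume j: "j < k"
      have "G (b+j) = c (b+j)" using c b2 j by simp
      also have "\<dots> = c ((p+j) mod n)" using pj2[of j] j by simp
      also have "\<dots> = c ((p+k+j) mod n)" using H j by simp
      also have "\<dots> = c (b+k+j)" using pj2[of "k+j"] j by (simp add: add.assoc)
      also have "\<dots> = G (b+k+j)" using c b2 j by simp
      finally show "G (b+j) = G (b+k+j)" .
    qed
    with G[OF k(1), of b] show False by (rule notE)
  qed
qed



lemma total_sq:
  fixes T Vf Ef :: "nat \<Rightarrow> nat"
  assumes T: "\<And>m. T m = (if even m then Vf (m div 2) else Ef (m div 2))"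
    and vsq: "\<And>q k. 0 < k \<Longrightarrow> q + 2*k \<le> L \<Longrightarrow> \<not> (\<forall>j<k. Vf (q+j) = Vf (q+k+j))"
    and adjT: "\<And>m. T m \<noteq> T (Suc m)"
    and adjV: "\<And>a. Vf a \<noteq> Vf (Suc a)"
    and two: "\<And>a b. Vf a = Ef b \<Longrightarrow> Vf a = \<alpha> \<or> Vf a = \<beta>"
    and k: "0 < k" "q + 2*k \<le> 2*L - 1"
  shows "\<not> (\<forall>j<k. T (q+j) = T (q+k+j))"
proof
  assume H: "\<forall>j<k. T (q+j) = T (q+k+j)"
  show False
  proof (cases "even k")
    case True
    then obtain k' where k': "k = 2*k'" by (rule evenE)
    have k'0: "0 < k'" using k k' by simp
    define a where "a = (q+1) div 2"
    have a1: "q \<le> 2*a" "2*a \<le> q + 1" unfolding a_def by presburger+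
    have V: "\<forall>j<k'. Vf (a+j) = Vf (a+k'+j)"
    proof (intro allI impI)
      fix j assume j: "j < k'"
      define d where "d = 2*(a+j) - q"
      have d1a: "2*(a+j) = q + d" using a1 j k' unfolding d_def by arith
      have d1b: "d < k" using a1 j k' unfolding d_def by arith
      note d1 = d1a d1b
      have "Vf (a+j) = T (2*(a+j))" using T[of "2*(a+j)"] by simp
      also have "\<dots> = T (q + d)" using d1 by simp
      also have "\<dots> = T (q + k + d)" using H d1 by simp
      also have "q + k + d = 2*(a+k'+j)" using d1 k' by simp
      also have "T (2*(a+k'+j)) = Vf (a+k'+j)" using T[of "2*(a+k'+j)"] by simp
      finally show "Vf (a+j) = Vf (a+k'+j)" .
    qed
    have aL: "a + 2*k' \<le> L" using a1 k k' by arith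
    show False using vsq[OF k'0 aL] V by (rule notE)
  next
    case False
    have pair: "T x = \<alpha> \<or> T x = \<beta>" if "odd (x + y)" "T x = T y" for x y
    proof (cases "even x")
      case True
      then have "odd y" using that by auto
      then have "Vf (x div 2) = Ef (y div 2)" using that True T[of x] T[of y] by simp
      then show ?thesis using two T[of x] True by simp
    next
      case False
      then have "even y" using that by auto
      then have "Vf (y div 2) = Ef (x div 2)" using that False T[of x] T[of y] by simp
      then have "Vf (y div 2) = \<alpha> \<or> Vf (y div 2) = \<beta>" by (rule two)
      then show ?thesis using \<open>even y\<close> that(2) T[of y] by simp
    qed
    have inB: "T m = \<alpha> \<or> T m = \<beta>" if "q \<le> m" "m < q + 2*k" for m
    proof (cases "m < q + k")
      case True
      have j: "m - q < k" using True that by simp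
      have "T (q + (m-q)) = T (q + k + (m-q))" using H[rule_format, OF j] .
      moreover have e1: "q + (m-q) = m" "q + k + (m-q) = m + k" using that by simp_all
      ultimately have "T m = T (m + k)" by simp
      moreover have "odd (m + (m + k))" using False by simp
      ultimately show ?thesis by (intro pair)
    next
      case F: False
      have j: "m - k - q < k" using F that by simp
      have "T (q + (m-k-q)) = T (q + k + (m-k-q))" using H[rule_format, OF j] .
      moreover have e1: "q + (m-k-q) = m - k" "q + k + (m-k-q) = m" using that F by simp_all
      ultimately have "T (m - k) = T m" by simp
      moreover have "odd ((m - k) + m)" using False F that by presburger
      ultimately have "T (m-k) = \<alpha> \<or> T (m-k) = \<beta>" by (intro pair)
      then show ?thesis using \<open>T (m - k) = T m\<close> by simp
    qed
    show False
    proof (cases "k = 1")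
      case True
      then have "T q = T (Suc q)" using H by simp
      with adjT[of q] show False by (rule notE)
    next
      case k1: False
      then have k3: "k \<ge> 3" using False k by presburger
      define m0 where "m0 = (if even q then q else Suc q)"
      have m0: "even m0" "q \<le> m0" "Suc (Suc m0) < q + 2*k" unfolding m0_def using k3 by auto
      have A: "T m0 = \<alpha> \<or> T m0 = \<beta>" using inB m0 by simp
      have B: "T (Suc m0) = \<alpha> \<or> T (Suc m0) = \<beta>" using inB m0 by simp
      have C: "T (Suc (Suc m0)) = \<alpha> \<or> T (Suc (Suc m0)) = \<beta>" using inB m0 by simp
      have "T m0 = T (Suc (Suc m0))" using A B C adjT[of m0] adjT[of "Suc m0"] by (elim disjE) simp_all
      moreover have "T m0 = Vf (m0 div 2)" using T m0 by simp
      moreover have "T (Suc (Suc m0)) = Vf (Suc (m0 div 2))" using T m0 by simp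
      ultimately show False using adjV[of "m0 div 2"] by simp
    qed
  qed
qed

definition ycol :: "nat \<Rightarrow> nat" where
  "ycol n = (if s3 0 \<noteq> 0 \<and> s3 (n-2) \<noteq> 0 then 0 else if s3 0 \<noteq> 1 \<and> s3 (n-2) \<noteq> 1 then 1 else 2)"

definition vcol :: "nat \<Rightarrow> nat \<Rightarrow> nat" where
  "vcol n i = (if i = n - 1 then 3 else s3 i)"

definition gcol :: "nat \<Rightarrow> nat \<Rightarrow> nat" where
  "gcol n i = 3 + (s3 i + 3 - ycol n) mod 3"

definition ecol :: "nat \<Rightarrow> nat \<Rightarrow> nat" where
  "ecol n i = (if i = n - 1 then ycol n else gcol n i)"

lemma ycol: "ycol n < 3" "ycol n \<noteq> s3 0" "ycol n \<noteq> s3 (n-2)"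
  using s3_lt[of 0] s3_lt[of "n-2"] unfolding ycol_def by auto

lemma gcol_ge: "gcol n i \<ge> 3" "gcol n i < 6" unfolding gcol_def by auto

lemma gcol_inj: "gcol n a = gcol n b \<Longrightarrow> s3 a = s3 b"
proof -
  assume h: "gcol n a = gcol n b"
  have "s3 a \<in> {0,1,2}" "s3 b \<in> {0,1,2}" "ycol n \<in> {0,1,2}"
    using s3_lt[of a] s3_lt[of b] ycol(1)[of n] by auto
  then show ?thesis using h unfolding gcol_def by auto
qed

lemma gcol_sqf: "0 < k \<Longrightarrow> \<not> (\<forall>j<k. gcol n (q+j) = gcol n (q+k+j))"
proof
  assume k: "0 < k" and H: "\<forall>j<k. gcol n (q+j) = gcol n (q+k+j)"
  have "\<forall>j<k. s3 (q+j) = s3 (q+k+j)"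
  proof (intro allI impI)
    fix j assume j: "j < k"
    show "s3 (q+j) = s3 (q+k+j)" using H[rule_format, OF j] by (rule gcol_inj)
  qed
  with s3_sqf[OF k, of q] show False by (rule notE)
qed

lemma s3_ne3: "s3 i \<noteq> 3" using s3_lt[of i] by simp

lemma gcol_ne: "gcol n i \<noteq> ycol n" using gcol_ge(1)[of n i] ycol(1)[of n] by simp

lemma vcol_lt: "vcol n i < 4" unfolding vcol_def using s3_lt[of i] by auto
lemma ecol_lt: "ecol n i < 6" unfolding ecol_def using gcol_ge[of n i] ycol(1)[of n] by auto

lemma vcol_two: "vcol n a = ecol n b \<Longrightarrow> vcol n a = 3 \<or> vcol n a = ycol n"
  unfolding vcol_def ecol_def using s3_lt[of a] gcol_ge[of n b] by (auto split: if_splits)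

lemma sucmod: "i < n \<Longrightarrow> Suc i mod n = (if Suc i = n then 0 else Suc i)"
  using mod_Suc[of i n] by simp

lemma adj_ve: "4 \<le> n \<Longrightarrow> i < n \<Longrightarrow> vcol n i \<noteq> ecol n i"
  unfolding vcol_def ecol_def using s3_lt[of i] gcol_ge[of n i] ycol[of n] by auto

lemma adj_ev: assumes "4 \<le> n" "i < n" shows "ecol n i \<noteq> vcol n (Suc i mod n)"
proof (cases "i = n - 1")
  case True
  then have "Suc i mod n = 0" using assms sucmod by simp
  then show ?thesis using True assms ycol[of n] unfolding ecol_def vcol_def by simp
next
  case False
  then have si: "Suc i mod n = Suc i" using assms sucmod by simp
  show ?thesis
  proof (cases "Suc i = n - 1")
    case True
    then have "i = n - 2" by simp
    then have "s3 i \<noteq> ycol n" using ycol(3)[of n] by simp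
    moreover have "s3 i \<in> {0,1,2}" "ycol n \<in> {0,1,2}" using s3_lt[of i] ycol(1)[of n] by auto
    ultimately have "(s3 i + 3 - ycol n) mod 3 \<noteq> 0" by auto
    then show ?thesis using si True False unfolding ecol_def vcol_def gcol_def by simp
  next
    case F: False
    then show ?thesis using si False s3_lt[of "Suc i"] gcol_ge[of n i] unfolding ecol_def vcol_def by simp
  qed
qed

lemma adj_vv: assumes "4 \<le> n" "i < n" shows "vcol n i \<noteq> vcol n (Suc i mod n)"
proof (cases "i = n - 1")
  case True
  then have "Suc i mod n = 0" using assms sucmod by simp
  then show ?thesis using True assms s3_lt[of 0] unfolding vcol_def by simp
next
  case False
  then have si: "Suc i mod n = Suc i" using assms sucmod by simp
  show ?thesis
    using si False s3_lt[of i] s3_adj[of i] unfolding vcol_def by simp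
qed



locale cyc =
  fixes V :: "'a set" and E :: "'a set set" and f :: "nat \<Rightarrow> 'a" and n :: nat
  assumes n4: "n \<ge> 4" and bij: "bij_betw f {0..<n} V"
    and Edef: "E = {{f i, f (Suc i mod n)} | i. i < n}"
begin

definition ix :: "'a \<Rightarrow> nat" where "ix v = inv_into {0..<n} f v"
definition cv :: "'a \<Rightarrow> nat" where "cv v = vcol n (ix v)"
definition ce :: "'a set \<Rightarrow> nat" where
  "ce e = ecol n (SOME i. i < n \<and> e = {f i, f (Suc i mod n)})"

lemma inj: "inj_on f {0..<n}" using bij by (simp add: bij_betw_def)
lemma img: "f ` {0..<n} = V" using bij by (simp add: bij_betw_def)

lemma ix_f: "i < n \<Longrightarrow> ix (f i) = i"
  unfolding ix_def using inv_into_f_f[OF inj, of i] by simp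

lemma ix_lt: "v \<in> V \<Longrightarrow> ix v < n"
  unfolding ix_def using inv_into_into[of v f "{0..<n}"] img by auto

lemma f_ix: "v \<in> V \<Longrightarrow> f (ix v) = v"
  unfolding ix_def using f_inv_into_f[of v f "{0..<n}"] img by auto

lemma sucmod_lt: "Suc i mod n < n" using n4 by simp

lemma edge_uniq:
  assumes "i < n" "j < n" "{f i, f (Suc i mod n)} = {f j, f (Suc j mod n)}"
  shows "i = j"
proof -
  have fi: "f a = f b \<Longrightarrow> a < n \<Longrightarrow> b < n \<Longrightarrow> a = b" for a b
    using inj unfolding inj_on_def by auto
  from assms(3) have "(f i = f j \<and> f (Suc i mod n) = f (Suc j mod n)) \<or>
      (f i = f (Suc j mod n) \<and> f (Suc i mod n) = f j)"
    by (simp add: doubleton_eq_iff)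
  then show ?thesis
  proof
    assume "f i = f j \<and> f (Suc i mod n) = f (Suc j mod n)"
    then have "f i = f j" by (rule conjunct1)
    from fi[OF this assms(1,2)] show ?thesis .
  next
    assume h: "f i = f (Suc j mod n) \<and> f (Suc i mod n) = f j"
    have e1: "i = Suc j mod n" using fi[OF conjunct1[OF h] assms(1) sucmod_lt] .
    have e2: "Suc i mod n = j" using fi[OF conjunct2[OF h] sucmod_lt assms(2)] .
    have s1: "Suc j mod n = (if Suc j = n then 0 else Suc j)" using sucmod assms by simp
    have s2: "Suc i mod n = (if Suc i = n then 0 else Suc i)" using sucmod assms by simp
    show ?thesis using e1 e2 s1 s2 n4 assms by (cases "Suc j = n"; cases "Suc i = n") simp_all
  qed
qed

lemma ce_f: "i < n \<Longrightarrow> ce {f i, f (Suc i mod n)} = ecol n i"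
  unfolding ce_def
proof -
  assume i: "i < n"
  have "(SOME j. j < n \<and> {f i, f (Suc i mod n)} = {f j, f (Suc j mod n)}) = i"
  proof (rule some_equality)
    show "i < n \<and> {f i, f (Suc i mod n)} = {f i, f (Suc i mod n)}" using i by simp
  next
    fix j assume h: "j < n \<and> {f i, f (Suc i mod n)} = {f j, f (Suc j mod n)}"
    show "j = i" using edge_uniq[OF i conjunct1[OF h] conjunct2[OF h]] by (rule sym)
  qed
  then show "ecol n (SOME j. j < n \<and> {f i, f (Suc i mod n)} = {f j, f (Suc j mod n)}) = ecol n i"
    by simp
qed

lemma step:
  assumes "is_path V E vs" "Suc j < length vs"
  shows "ix (vs ! Suc j) = Suc (ix (vs ! j)) mod n \<or> ix (vs ! j) = Suc (ix (vs ! Suc j)) mod n"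
proof -
  have "{vs ! j, vs ! Suc j} \<in> E" using assms unfolding is_path_def by blast
  then obtain i where i: "i < n" "{vs ! j, vs ! Suc j} = {f i, f (Suc i mod n)}"
    unfolding Edef by blast
  then have "(vs ! j = f i \<and> vs ! Suc j = f (Suc i mod n)) \<or>
      (vs ! j = f (Suc i mod n) \<and> vs ! Suc j = f i)"
    by (simp add: doubleton_eq_iff)
  then show ?thesis
  proof
    assume "vs ! j = f i \<and> vs ! Suc j = f (Suc i mod n)"
    then show ?thesis using ix_f i sucmod_lt by simp
  next
    assume "vs ! j = f (Suc i mod n) \<and> vs ! Suc j = f i"
    then show ?thesis using ix_f i sucmod_lt by simp
  qed
qed

lemma fwd:
  assumes ne: "vs \<noteq> []" and dist: "distinct vs" and sub: "set vs \<subseteq> V"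
    and fw: "\<And>j. Suc j < length vs \<Longrightarrow> ix (vs ! Suc j) = Suc (ix (vs ! j)) mod n"
  shows "nonrepetitive (total_seq cv ce vs) \<and> nonrepetitive (map cv vs) \<and> nonrepetitive (edge_seq ce vs)"
proof -
  define L where "L = length vs"
  have L1: "1 \<le> L" using ne L_def by (cases vs) auto
  have "card V = n" using bij_betw_same_card[OF bij] by simp
  moreover have "finite V" using img by auto
  ultimately have Ln: "L \<le> n" using card_mono[OF \<open>finite V\<close> sub] distinct_card[OF dist] L_def by simp
  define i0 where "i0 = ix (vs ! 0)"
  have ixj: "ix (vs ! j) = (i0 + j) mod n" if "j < L" for j
    using that
  proof (induction j)
    case 0
    have "vs ! 0 \<in> V" using sub ne by (simp add: subsetD)
    then show ?case using ix_lt i0_def by simp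
  next
    case (Suc j)
    then have "ix (vs ! Suc j) = Suc (ix (vs ! j)) mod n" using fw L_def by simp
    also have "\<dots> = Suc ((i0 + j) mod n) mod n" using Suc by simp
    also have "\<dots> = (i0 + Suc j) mod n" by (simp add: mod_Suc_eq)
    finally show ?case .
  qed
  have inV: "j < L \<Longrightarrow> vs ! j \<in> V" for j using sub L_def by (simp add: subsetD)
  have vsj: "vs ! j = f ((i0 + j) mod n)" if "j < L" for j
    using f_ix[OF inV[OF that]] ixj[OF that] by simp
  define Vf where "Vf j = vcol n ((i0 + j) mod n)" for j
  define Ef where "Ef j = ecol n ((i0 + j) mod n)" for j
  have cvj: "cv (vs ! j) = Vf j" if "j < L" for j unfolding cv_def Vf_def using ixj[OF that] by simp
  have cej: "ce {vs ! j, vs ! Suc j} = Ef j" if "Suc j < L" for j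
  proof -
    have "vs ! Suc j = f (Suc ((i0 + j) mod n) mod n)" using vsj[OF that] by (simp add: mod_Suc_eq)
    moreover have "vs ! j = f ((i0 + j) mod n)" using vsj that by simp
    ultimately show ?thesis unfolding Ef_def using ce_f[of "(i0 + j) mod n"] n4 by simp
  qed
  have m1: "map cv vs = map Vf [0..<L]"
    by (rule nth_equalityI) (auto simp: L_def cvj)
  have m2: "edge_seq ce vs = map Ef [0..<L - 1]"
    unfolding edge_seq_nth by (rule nth_equalityI) (auto simp: L_def cej)
  define T where "T m = (if even m then Vf (m div 2) else Ef (m div 2))" for m
  have m3: "total_seq cv ce vs = map T [0..<2*L - 1]"
    unfolding total_seq_nth[OF ne]
  proof (rule nth_equalityI)
    show "length (map (\<lambda>m. if even m then cv (vs ! (m div 2)) else ce {vs ! (m div 2), vs ! Suc (m div 2)})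
        [0..<2 * length vs - 1]) = length (map T [0..<2 * L - 1])" using L_def by simp
  next
    fix m assume "m < length (map (\<lambda>m. if even m then cv (vs ! (m div 2)) else ce {vs ! (m div 2), vs ! Suc (m div 2)})
        [0..<2 * length vs - 1])"
    then have m: "m < 2 * L - 1" using L_def by simp
    show "map (\<lambda>m. if even m then cv (vs ! (m div 2)) else ce {vs ! (m div 2), vs ! Suc (m div 2)})
        [0..<2 * length vs - 1] ! m = map T [0..<2 * L - 1] ! m"
    proof (cases "even m")
      case True
      then have "m div 2 < L" using m by presburger
      then show ?thesis using True m cvj L_def unfolding T_def by simp
    next
      case False
      then have "Suc (m div 2) < L" using m by presburger
      then show ?thesis using False m cej L_def unfolding T_def by simp
    qed
  qed
  have vsq: "\<not> (\<forall>j<k. Vf (q+j) = Vf (q+k+j))" if "0 < k" "q + 2*k \<le> L" for q k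
  proof -
    have "\<not> (\<forall>j<k. vcol n ((i0 + q + j) mod n) = vcol n ((i0 + q + k + j) mod n))"
    proof (rule cyc_sqf[of s3 3])
      show "\<And>q k. 0 < k \<Longrightarrow> \<not> (\<forall>j<k. s3 (q + j) = s3 (q + k + j))" by (rule s3_sqf)
      show "\<And>i. s3 i \<noteq> 3" by (rule s3_ne3)
      show "\<And>i. vcol n i = (if i = n - 1 then 3 else s3 i)" by (simp add: vcol_def)
      show "0 < k" by (rule that(1))
      show "2 * k \<le> n" using that Ln by linarith
    qed
    then show ?thesis unfolding Vf_def by (simp add: add.assoc)
  qed
  have esq: "\<not> (\<forall>j<k. Ef (q+j) = Ef (q+k+j))" if "0 < k" "q + 2*k \<le> L - 1" for q k
  proof -
    have "\<not> (\<forall>j<k. ecol n ((i0 + q + j) mod n) = ecol n ((i0 + q + k + j) mod n))"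
    proof (rule cyc_sqf[of "gcol n" "ycol n"])
      show "\<And>q k. 0 < k \<Longrightarrow> \<not> (\<forall>j<k. gcol n (q + j) = gcol n (q + k + j))" by (rule gcol_sqf)
      show "\<And>i. gcol n i \<noteq> ycol n" by (rule gcol_ne)
      show "\<And>i. ecol n i = (if i = n - 1 then ycol n else gcol n i)" by (simp add: ecol_def)
      show "0 < k" by (rule that(1))
      show "2 * k \<le> n" using that Ln by linarith
    qed
    then show ?thesis unfolding Ef_def by (simp add: add.assoc)
  qed
  have im: "(i0 + j) mod n < n" for j using n4 by simp
  have sm: "(i0 + Suc j) mod n = Suc ((i0 + j) mod n) mod n" for j by (simp add: mod_Suc_eq)
  have adjT: "T m \<noteq> T (Suc m)" for m
  proof (cases "even m")
    case True
    then have "Suc m div 2 = m div 2" by presburger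
    then show ?thesis using True adj_ve[OF n4 im[of "m div 2"]] unfolding T_def Vf_def Ef_def by simp
  next
    case False
    then have "Suc m div 2 = Suc (m div 2)" by presburger
    then show ?thesis using False adj_ev[OF n4 im[of "m div 2"]] unfolding T_def Vf_def Ef_def sm by (simp add: mod_Suc_eq)
  qed
  have adjV: "Vf a \<noteq> Vf (Suc a)" for a
    using adj_vv[OF n4 im[of a]] unfolding Vf_def sm by (simp add: mod_Suc_eq)
  have two: "Vf a = 3 \<or> Vf a = ycol n" if "Vf a = Ef b" for a b
    using vcol_two[OF that[unfolded Vf_def Ef_def]] unfolding Vf_def by simp
  have tsq: "\<not> (\<forall>j<k. T (q+j) = T (q+k+j))" if "0 < k" "q + 2*k \<le> 2*L - 1" for q k
    by (rule total_sq[of T Vf Ef L, OF _ vsq adjT adjV two that]) (simp add: T_def)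
  have "nonrepetitive (map T [0..<2*L - 1])" by (rule nonrep_map[OF tsq])
  moreover have "nonrepetitive (map Vf [0..<L])" by (rule nonrep_map[OF vsq])
  moreover have "nonrepetitive (map Ef [0..<L - 1])" by (rule nonrep_map[OF esq])
  ultimately show ?thesis using m1 m2 m3 by simp
qed

end



context cyc begin

lemma colouring: "total_thue_colouring V E cv ce"
  unfolding total_thue_colouring_def
proof (intro allI impI)
  fix vs assume path: "is_path V E vs"
  have ne: "vs \<noteq> []" and dist: "distinct vs" and sub: "set vs \<subseteq> V"
    using path unfolding is_path_def by auto
  define L where "L = length vs"
  have inV: "j < L \<Longrightarrow> vs ! j \<in> V" for j using sub L_def by (simp add: subsetD)
  define P where "P j \<longleftrightarrow> ix (vs ! Suc j) = Suc (ix (vs ! j)) mod n" for j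
  have stp: "P j \<or> ix (vs ! j) = Suc (ix (vs ! Suc j)) mod n" if "Suc j < L" for j
    using step[OF path, of j] that unfolding P_def L_def by simp
  have sminj: "a = b" if "a < n" "b < n" "Suc a mod n = Suc b mod n" for a b
  proof -
    have s1: "Suc a mod n = (if Suc a = n then 0 else Suc a)" using sucmod[of a n] that(1) by simp
    have s2: "Suc b mod n = (if Suc b = n then 0 else Suc b)" using sucmod[of b n] that(2) by simp
    have "(if Suc a = n then 0 else Suc a) = (if Suc b = n then (0::nat) else Suc b)"
      using that(3) unfolding s1 s2 .
    then show ?thesis using that(1,2) by (cases "Suc a = n"; cases "Suc b = n") simp_all
  qed
  have eqix: "False" if "j < L" "k < L" "j \<noteq> k" "ix (vs ! j) = ix (vs ! k)" for j k
  proof -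
    have "vs ! j = f (ix (vs ! j))" by (rule f_ix[OF inV[OF that(1)], symmetric])
    also have "\<dots> = f (ix (vs ! k))" using that(4) by simp
    also have "\<dots> = vs ! k" by (rule f_ix[OF inV[OF that(2)]])
    finally have "vs ! j = vs ! k" .
    then show False using dist that L_def by (simp add: nth_eq_iff_index_eq)
  qed
  have noswitch: "P j = P (Suc j)" if "Suc (Suc j) < L" for j
  proof (rule ccontr)
    assume ne2: "P j \<noteq> P (Suc j)"
    show False
    proof (cases "P j")
      case True
      from ne2 True have np: "\<not> P (Suc j)" by blast
      then have b: "ix (vs ! Suc j) = Suc (ix (vs ! Suc (Suc j))) mod n" using stp[OF that] by simp
      have a: "ix (vs ! Suc j) = Suc (ix (vs ! j)) mod n" using True unfolding P_def .
      have "ix (vs ! j) = ix (vs ! Suc (Suc j))"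
        by (rule sminj[OF ix_lt[OF inV] ix_lt[OF inV] trans[OF sym[OF a] b]]) (use that in simp_all)
      then show False using eqix[of j "Suc (Suc j)"] that by simp
    next
      case False
      then have a: "ix (vs ! j) = Suc (ix (vs ! Suc j)) mod n" using stp[of j] that by simp
      from ne2 False have "P (Suc j)" by blast
      then have b: "ix (vs ! Suc (Suc j)) = Suc (ix (vs ! Suc j)) mod n"
        unfolding P_def .
      have "ix (vs ! j) = ix (vs ! Suc (Suc j))" using trans[OF a sym[OF b]] .
      then show False using eqix[of j "Suc (Suc j)"] that by simp
    qed
  qed
  have allP: "P j = P 0" if "Suc j < L" for j
    using that
  proof (induction j)
    case 0 then show ?case by simp
  next
    case (Suc j)
    then have 1: "P j = P 0" by simp
    have 2: "P j = P (Suc j)" using noswitch[of j] Suc.prems by simp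
    from 1 2 show ?case by blast
  qed
  show "nonrepetitive (total_seq cv ce vs) \<and> nonrepetitive (map cv vs) \<and> nonrepetitive (edge_seq ce vs)"
  proof (cases "\<forall>j. Suc j < L \<longrightarrow> P j")
    case True
    show ?thesis
    proof (rule fwd[OF ne dist sub])
      fix j assume "Suc j < length vs"
      then have "P j" using True L_def by simp
      then show "ix (vs ! Suc j) = Suc (ix (vs ! j)) mod n" unfolding P_def .
    qed
  next
    case False
    then obtain j0 where "Suc j0 < L" "\<not> P j0" by blast
    then have nP0: "\<not> P 0" using allP[of j0] by blast
    have bw: "ix (vs ! j) = Suc (ix (vs ! Suc j)) mod n" if "Suc j < L" for j
    proof -
      have "\<not> P j" using allP[OF that] nP0 by blast
      then show ?thesis using stp[OF that] by blast
    qed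
    have fr: "nonrepetitive (total_seq cv ce (rev vs)) \<and> nonrepetitive (map cv (rev vs))
        \<and> nonrepetitive (edge_seq ce (rev vs))"
    proof (rule fwd)
      show "rev vs \<noteq> []" using ne by simp
      show "distinct (rev vs)" using dist by simp
      show "set (rev vs) \<subseteq> V" using sub by simp
      fix j assume j: "Suc j < length (rev vs)"
      define J where "J = L - 2 - j"
      have jL: "Suc j < L" using j L_def by simp
      have J1: "Suc J < L" using jL unfolding J_def by linarith
      have "rev vs ! Suc j = vs ! (L - Suc (Suc j))" using jL rev_nth[of "Suc j" vs] L_def by simp
      moreover have "L - Suc (Suc j) = J" unfolding J_def by simp
      ultimately have J2: "rev vs ! Suc j = vs ! J" by simp
      have "rev vs ! j = vs ! (L - Suc j)" using jL rev_nth[of j vs] L_def by simp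
      moreover have "L - Suc j = Suc J" unfolding J_def using jL by linarith
      ultimately have J3: "rev vs ! j = vs ! Suc J" by simp
      note J = J1 J2 J3
      show "ix (rev vs ! Suc j) = Suc (ix (rev vs ! j)) mod n" unfolding J(2,3) by (rule bw[OF J(1)])
    qed
    have r1: "nonrepetitive (rev (total_seq cv ce vs))"
      using conjunct1[OF fr] unfolding total_seq_rev .
    have 1: "nonrepetitive (total_seq cv ce vs)" using nonrep_rev[OF r1] by simp
    have r2: "nonrepetitive (rev (map cv vs))"
      using conjunct1[OF conjunct2[OF fr]] unfolding rev_map .
    have 2: "nonrepetitive (map cv vs)" using nonrep_rev[OF r2] by simp
    have r3: "nonrepetitive (rev (edge_seq ce vs))"
      using conjunct2[OF conjunct2[OF fr]] unfolding edge_seq_rev .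
    have 3: "nonrepetitive (edge_seq ce vs)" using nonrep_rev[OF r3] by simp
    show ?thesis using 1 2 3 by (intro conjI)
  qed
qed

lemma bounds: "(\<forall>v\<in>V. cv v < 6) \<and> (\<forall>e\<in>E. ce e < 6)"
proof (intro conjI ballI)
  fix v show "cv v < 6" unfolding cv_def using vcol_lt[of n "ix v"] by simp
next
  fix e show "ce e < 6" unfolding ce_def by (rule ecol_lt)
qed

end

lemma lower_bound:
  fixes V :: "'a set" and E :: "'a set set" and f :: "nat \<Rightarrow> 'a" and n :: nat
  assumes n4: "n \<ge> 4" and bij: "bij_betw f {0..<n} V"
    and Edef: "E = {{f i, f (Suc i mod n)} | i. i < n}"
    and col: "total_thue_colouring V E cv ce"
    and cvb: "\<forall>v\<in>V. (cv v :: nat) < 3" and ceb: "\<forall>e\<in>E. (ce e :: nat) < 3"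
  shows False
proof -
  define vs where "vs = map f [0..<4]"
  have vs_eq: "vs = [f 0, f 1, f 2, f 3]" unfolding vs_def by (simp add: upt_rec numeral_2_eq_2 numeral_3_eq_3)
  have vsn: "i < 4 \<Longrightarrow> vs ! i = f i" for i unfolding vs_def by simp
  have vsl: "length vs = 4" unfolding vs_def by simp
  have inj: "inj_on f {0..<n}" using bij by (simp add: bij_betw_def)
  have img: "f ` {0..<n} = V" using bij by (simp add: bij_betw_def)
  have fV: "i < n \<Longrightarrow> f i \<in> V" for i using img by auto
  have ed: "i < 3 \<Longrightarrow> {f i, f (Suc i)} \<in> E" for i
  proof -
    assume i: "i < 3"
    then have "Suc i mod n = Suc i" using n4 by simp
    then have "{f i, f (Suc i)} = {f i, f (Suc i mod n)}" by simp
    then show ?thesis unfolding Edef using i n4 by auto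
  qed
  have fne: "f i \<noteq> f j" if "i < n" "j < n" "i \<noteq> j" for i j
    using inj that unfolding inj_on_def by auto
  have "distinct [f 0, f 1, f 2, f (3::nat)]"
    using fne[of 0 1] fne[of 0 2] fne[of 0 3] fne[of 1 2] fne[of 1 3] fne[of 2 3] n4 by auto
  moreover have "set vs \<subseteq> V" unfolding vs_eq using fV n4 by auto
  moreover have EE: "\<forall>i. Suc i < length vs \<longrightarrow> {vs ! i, vs ! Suc i} \<in> E"
  proof (intro allI impI)
    fix i assume "Suc i < length vs"
    then have "i < 3" using vsl by simp
    then show "{vs ! i, vs ! Suc i} \<in> E" using ed[of i] vsn[of i] vsn[of "Suc i"] by simp
  qed
  ultimately have path: "is_path V E vs" unfolding is_path_def using vs_eq by auto
  define x1 where "x1 = cv (f 0)"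
  define x2 where "x2 = ce {f 0, f 1}"
  define x3 where "x3 = cv (f 1)"
  define x4 where "x4 = ce {f 1, f 2}"
  define x5 where "x5 = cv (f 2)"
  define x6 where "x6 = ce {f 2, f 3}"
  define x7 where "x7 = cv (f 3)"
  have ts: "total_seq cv ce vs = [x1, x2, x3, x4, x5, x6, x7]"
    unfolding vs_eq x1_def x2_def x3_def x4_def x5_def x6_def x7_def by simp
  have ms: "map cv vs = [x1, x3, x5, x7]"
    unfolding vs_eq x1_def x3_def x5_def x7_def by simp
  have es: "edge_seq ce vs = [x2, x4, x6]"
    unfolding vs_eq x2_def x4_def x6_def by (simp add: edge_seq_simps)
  note C = col[unfolded total_thue_colouring_def, rule_format, OF path]
  have N1: "nonrepetitive [x1, x2, x3, x4, x5, x6, x7]" using conjunct1[OF C] unfolding ts .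
  have N2: "nonrepetitive [x1, x3, x5, x7]" using conjunct1[OF conjunct2[OF C]] unfolding ms .
  have N3: "nonrepetitive [x2, x4, x6]" using conjunct2[OF conjunct2[OF C]] unfolding es .
  have E1: "{f 0, f 1} \<in> E" using EE[rule_format, of 0] vsl vsn[of 0] vsn[of 1] by (simp add: numeral_2_eq_2 numeral_3_eq_3)
  have E2: "{f 1, f 2} \<in> E" using EE[rule_format, of 1] vsl vsn[of 1] vsn[of 2] by (simp add: numeral_2_eq_2 numeral_3_eq_3)
  have E3: "{f 2, f 3} \<in> E" using EE[rule_format, of 2] vsl vsn[of 2] vsn[of 3] by (simp add: numeral_2_eq_2 numeral_3_eq_3)
  have vals: "x1 < 3" "x2 < 3" "x3 < 3" "x4 < 3" "x5 < 3" "x6 < 3"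
    unfolding x1_def x2_def x3_def x4_def x5_def x6_def
    using cvb ceb fV[of 0] fV[of 1] fV[of 2] E1 E2 E3 n4 by auto
  have d12: "x1 \<noteq> x2" using nonrep_sq[OF N1, of 1 0] by simp
  have d23: "x2 \<noteq> x3" using nonrep_sq[OF N1, of 1 1] by simp
  have d34: "x3 \<noteq> x4" using nonrep_sq[OF N1, of 1 2] by simp
  have d45: "x4 \<noteq> x5" using nonrep_sq[OF N1, of 1 3] by simp
  have d56: "x5 \<noteq> x6" using nonrep_sq[OF N1, of 1 4] by simp
  have d13: "x1 \<noteq> x3" using nonrep_sq[OF N2, of 1 0] by simp
  have d35: "x3 \<noteq> x5" using nonrep_sq[OF N2, of 1 1] by simp
  have d24: "x2 \<noteq> x4" using nonrep_sq[OF N3, of 1 0] by simp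
  have d46: "x4 \<noteq> x6" using nonrep_sq[OF N3, of 1 1] by simp
  have sq: "x1 \<noteq> x4 \<or> x2 \<noteq> x5 \<or> x3 \<noteq> x6"
  proof -
    obtain j where "j < 3" "[x1, x2, x3, x4, x5, x6, x7] ! (0 + j) \<noteq> [x1, x2, x3, x4, x5, x6, x7] ! (0 + 3 + j)"
      using nonrep_sq[OF N1, of 3 0] by auto
    then show ?thesis by (auto simp: numeral_3_eq_3 less_Suc_eq)
  qed
  have tri: "d = a" if "a < 3" "b < 3" "c < 3" "d < 3" "a \<noteq> b" "b \<noteq> c" "a \<noteq> c" "d \<noteq> b" "d \<noteq> c"
    for a b c d :: nat using that by arith
  have e4: "x4 = x1" by (rule tri[of x1 x2 x3 x4]) (use vals d12 d23 d13 d24 d34 in auto)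
  have e5: "x5 = x2" by (rule tri[of x2 x1 x3 x5]) (use vals d12 d23 d13 d35 d45 e4 in auto)
  have e6: "x6 = x3" by (rule tri[of x3 x1 x2 x6]) (use vals d12 d23 d13 d56 d46 e4 e5 in auto)
  show False using sq e4 e5 e6 by simp
qed

theorem corollary16:
  fixes V :: "'a set" and E :: "'a set set" and f :: "nat \<Rightarrow> 'a" and n :: nat
  assumes "n \<ge> 4"
    and "bij_betw f {0..<n} V"
    and "E = {{f i, f (Suc i mod n)} | i. i < n}"
  shows "4 \<le> pi_T V E \<and> pi_T V E \<le> 6"
proof -
  interpret cyc V E f n using assms by unfold_locales
  define Q where "Q k \<longleftrightarrow> (\<exists>cv ce. (\<forall>v\<in>V. cv v < k) \<and> (\<forall>e\<in>E. ce e < k) \<and>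
                  total_thue_colouring V E (cv :: 'a \<Rightarrow> nat) (ce :: 'a set \<Rightarrow> nat))" for k
  have piQ: "pi_T V E = (LEAST k. Q k)" unfolding pi_T_def Q_def by simp
  have Q6: "Q 6" unfolding Q_def using bounds colouring by blast
  have up: "pi_T V E \<le> 6" unfolding piQ by (rule Least_le[of Q, OF Q6])
  have lo: "4 \<le> pi_T V E"
  proof (rule ccontr)
    assume "\<not> 4 \<le> pi_T V E"
    then have lt: "pi_T V E \<le> 3" by simp
    have "Q (pi_T V E)" unfolding piQ by (rule LeastI[of Q, OF Q6])
    then obtain cv' ce' where c: "\<forall>v\<in>V. cv' v < pi_T V E" "\<forall>e\<in>E. ce' e < pi_T V E"
        "total_thue_colouring V E (cv' :: 'a \<Rightarrow> nat) (ce' :: 'a set \<Rightarrow> nat)"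
      unfolding Q_def by blast
    have "\<forall>v\<in>V. cv' v < 3" using c(1) lt by fastforce
    moreover have "\<forall>e\<in>E. ce' e < 3" using c(2) lt by fastforce
    ultimately show False using lower_bound[OF assms c(3)] by blast
  qed
  show ?thesis using up lo by simp
qed


end
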